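(* Let $n\ge 1$ and $\tau\in\mathfrak S_n$. Write $\tau=m_1a_1m_2a_2\cdots m_ka_k$, where $m_1,\dots,m_k$ are the left-to-right minima of $\tau$ in order of position and each $a_i$ is the (possibly empty) factor of $\tau$ between $m_i$ and $m_{i+1}$ (or after $m_k$). Then $\tau\in\mathrm{Sort}_n(\mathrm{SC}_{1\underline{32}})$ if and only if the concatenation $\mathrm{rev}(a_1)\mathrm{rev}(a_2)\cdots\mathrm{rev}(a_k)$ is a decreasing sequence.
   Context: $\mathfrak S_n$ is the set of permutations of $\{1,\dots,n\}$; $\mathrm{rev}$ reverses a sequence. A left-to-right minimum of $\tau$ is an entry smaller than all entries to its left. A vincular pattern is a permutation with some entries underlined; a sequence contains it if it has a subsequence with the same relative order in which entries corresponding to adjacent underlined entries occupy consecutive positions. An occurrence of $1\underline{32}$ is $a_i a_j a_{j+1}$ with $i<j$ and $a_i<a_{j+1}<a_j$. For a pattern $\sigma$, the map $\mathrm{SC}_\sigma$ acts on $\tau$: read entries left to right; when the next entry $x$ is read, if pushing $x$ yields a stack whose entries read top to bottom (stack adjacency = consecutive positions) avoid $\sigma$, push $x$; otherwise pop the top stack entry to the output and repeat. At the end pop all remaining entries; the output is $\mathrm{SC}_\sigma(\tau)$. West's stack-sorting map is $s=\mathrm{SC}_{21}$. $\mathrm{Sort}_n(\mathrm{SC}_\sigma)=\{\tau\in\mathfrak S_n : s(\mathrm{SC}_\sigma(\tau))=12\cdots n\}$. *)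

theory Defs
  imports "HOL-Combinatorics.Multiset_Permutations"
begin

text \<open>Occurrence of the vincular pattern 1 underline(32): a_i a_j a_(j+1) with i<j and
  a_i < a_(j+1) < a_j.\<close>
definition contains_1_32 :: "nat list \<Rightarrow> bool" where
  "contains_1_32 xs \<longleftrightarrow>
     (\<exists>i j. i < j \<and> Suc j < length xs \<and> xs ! i < xs ! (Suc j) \<and> xs ! (Suc j) < xs ! j)"

definition contains_21 :: "nat list \<Rightarrow> bool" where
  "contains_21 xs \<longleftrightarrow> (\<exists>i j. i < j \<and> j < length xs \<and> xs ! j < xs ! i)"

text \<open>Pattern-avoiding stack machine SC. Arguments: the containment predicate of the pattern,
  the remaining input, and the stack (list head = top).\<close>
fun SC_aux :: "(nat list \<Rightarrow> bool) \<Rightarrow> nat list \<Rightarrow> nat list \<Rightarrow> nat list" where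
  "SC_aux cont [] st = st"
| "SC_aux cont (x # xs) [] = SC_aux cont xs [x]"
| "SC_aux cont (x # xs) (y # st) =
     (if \<not> cont (x # y # st) then SC_aux cont xs (x # y # st)
      else y # SC_aux cont (x # xs) st)"

definition SC :: "(nat list \<Rightarrow> bool) \<Rightarrow> nat list \<Rightarrow> nat list" where
  "SC cont \<tau> = SC_aux cont \<tau> []"

definition west_s :: "nat list \<Rightarrow> nat list" where
  "west_s = SC contains_21"

definition Sort_SC :: "nat \<Rightarrow> (nat list \<Rightarrow> bool) \<Rightarrow> nat list set" where
  "Sort_SC n cont = {\<tau> \<in> permutations_of_set {1..n}. west_s (SC cont \<tau>) = [1..<n+1]}"

definition is_ltr_min :: "nat list \<Rightarrow> nat \<Rightarrow> bool" where
  "is_ltr_min xs i \<longleftrightarrow> i < length xs \<and> (\<forall>j<i. xs ! i < xs ! j)"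

definition ltr_minima :: "nat list \<Rightarrow> nat list" where
  "ltr_minima xs = [xs ! i. i \<leftarrow> [0..<length xs], is_ltr_min xs i]"

end

theory Submission
  imports Defs "HOL-Library.Sublist"
begin


fun dl :: "nat list \<Rightarrow> nat set" where
  "dl (a # b # zs) = (if b < a then {b} else {}) \<union> dl (b # zs)"
| "dl _ = {}"

lemma dl_iff: "z \<in> dl xs \<longleftrightarrow> (\<exists>j. Suc j < length xs \<and> z = xs ! Suc j \<and> xs ! Suc j < xs ! j)"
proof (induction xs rule: dl.induct)
  case (1 a b zs)
  show ?case
  proof
    assume "z \<in> dl (a # b # zs)"
    then show "\<exists>j. Suc j < length (a # b # zs) \<and> z = (a # b # zs) ! Suc j \<and> (a # b # zs) ! Suc j < (a # b # zs) ! j"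
    proof (cases "z \<in> dl (b # zs)")
      case True
      then obtain j where "Suc j < length (b # zs) \<and> z = (b # zs) ! Suc j \<and> (b # zs) ! Suc j < (b # zs) ! j"
        using 1 by blast
      then show ?thesis by (intro exI[of _ "Suc j"]) auto
    next
      case False
      then show ?thesis using \<open>z \<in> dl (a # b # zs)\<close> by (intro exI[of _ 0]) (auto split: if_splits)
    qed
  next
    assume "\<exists>j. Suc j < length (a # b # zs) \<and> z = (a # b # zs) ! Suc j \<and> (a # b # zs) ! Suc j < (a # b # zs) ! j"
    then obtain j where j: "Suc j < length (a # b # zs)" "z = (a # b # zs) ! Suc j" "(a # b # zs) ! Suc j < (a # b # zs) ! j" by blast
    show "z \<in> dl (a # b # zs)"
    proof (cases j)
      case 0 then show ?thesis using j by auto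
    next
      case (Suc j') then show ?thesis using j 1 by auto
    qed
  qed
qed auto

lemma contains_Cons: "contains_1_32 (x # xs) \<longleftrightarrow> contains_1_32 xs \<or> (\<exists>z\<in>dl xs. x < z)"
proof
  assume "contains_1_32 (x # xs)"
  then obtain i j where ij: "i < j" "Suc j < length (x#xs)" "(x#xs) ! i < (x#xs) ! (Suc j)" "(x#xs) ! (Suc j) < (x#xs) ! j"
    unfolding contains_1_32_def by blast
  then obtain j' where j': "j = Suc j'" by (cases j) auto
  show "contains_1_32 xs \<or> (\<exists>z\<in>dl xs. x < z)"
  proof (cases i)
    case 0
    then show ?thesis using ij j' dl_iff[of "xs ! Suc j'" xs] by auto
  next
    case (Suc i')
    then show ?thesis using ij j' unfolding contains_1_32_def by (intro disjI1 exI[of _ i'] exI[of _ j']) auto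
  qed
next
  assume "contains_1_32 xs \<or> (\<exists>z\<in>dl xs. x < z)"
  then show "contains_1_32 (x # xs)"
  proof
    assume "contains_1_32 xs"
    then obtain i j where "i < j" "Suc j < length xs" "xs ! i < xs ! (Suc j)" "xs ! (Suc j) < xs ! j"
      unfolding contains_1_32_def by blast
    then show ?thesis unfolding contains_1_32_def by (intro exI[of _ "Suc i"] exI[of _ "Suc j"]) auto
  next
    assume "\<exists>z\<in>dl xs. x < z"
    then obtain z j where "Suc j < length xs" "z = xs ! Suc j" "xs ! Suc j < xs ! j" "x < z"
      using dl_iff by metis
    then show ?thesis unfolding contains_1_32_def by (intro exI[of _ 0] exI[of _ "Suc j"]) auto
  qed
qed

lemma dl_subset: "dl xs \<subseteq> set xs"
  by (induction xs rule: dl.induct) auto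

lemma dl_append: "dl (xs @ y # ys) \<subseteq> set xs \<union> {y} \<union> dl (y # ys)"
proof (induction xs)
  case Nil then show ?case by auto
next
  case (Cons x xs)
  then show ?case by (cases xs) auto
qed

lemma dl_sorted: "sorted_wrt (<) xs \<Longrightarrow> dl xs = {}"
  by (induction xs rule: dl.induct) auto

lemma dl_empty_sorted: "distinct xs \<Longrightarrow> dl xs = {} \<Longrightarrow> sorted_wrt (<) xs"
proof (induction xs rule: dl.induct)
  case (1 a b zs)
  then have "a < b" "sorted_wrt (<) (b # zs)" by (auto split: if_splits)
  then show ?case by auto
qed auto

lemma not_contains_nil: "\<not> contains_1_32 []" "\<not> contains_1_32 [x]"
  unfolding contains_1_32_def by auto

lemma not_contains_sorted: "sorted_wrt (<) xs \<Longrightarrow> \<not> contains_1_32 xs"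
proof (induction xs)
  case Nil then show ?case by (simp add: not_contains_nil)
next
  case (Cons x xs) then show ?case by (simp add: contains_Cons dl_sorted)
qed

lemma SC_mset: "mset (SC_aux c xs st) = mset xs + mset st"
  by (induction c xs st rule: SC_aux.induct) auto

lemma SC_subseq: "subseq st (SC_aux c xs st)"
proof (induction c xs st rule: SC_aux.induct)
  case (3 cont x xs y st)
  then show ?case by (auto dest: subseq_Cons' split: if_splits)
qed auto


abbreviation "c132 \<equiv> contains_1_32"

lemma push_step: "st \<noteq> [] \<Longrightarrow> \<not> cont (x # st) \<Longrightarrow> SC_aux cont (x # xs) st = SC_aux cont xs (x # st)"
  by (cases st) auto

lemma pop_step: "cont (x # y # st) \<Longrightarrow> SC_aux cont (x # xs) (y # st) = y # SC_aux cont (x # xs) st"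
  by simp

lemma dl_stack: "sorted_wrt (<) (m # ms) \<Longrightarrow> dl (rev a @ m # ms) \<subseteq> set a \<union> {m}"
  using dl_append[of "rev a" m ms] dl_sorted[of "m # ms"] by auto

lemma nc_stack:
  assumes "sorted_wrt (<) a" "\<forall>z\<in>set a. m < z" "sorted_wrt (<) (m # ms)"
  shows "\<not> c132 (rev a @ m # ms)"
  using assms
proof (induction a rule: rev_induct)
  case Nil
  then show ?case using not_contains_sorted by simp
next
  case (snoc y a0)
  have s: "sorted_wrt (<) a0" "\<forall>z\<in>set a0. z < y" using snoc.prems by (auto simp: sorted_wrt_append)
  have "\<forall>z\<in>dl (rev a0 @ m # ms). z < y"
    using dl_stack[OF snoc.prems(3), of a0] s snoc.prems(2) by auto
  then show ?case using snoc s by (auto simp: contains_Cons)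
qed

lemma push_block:
  assumes "sorted_wrt (<) a" "\<forall>z\<in>set a. m < z" "sorted_wrt (<) (m # ms)"
  shows "SC_aux c132 (a @ rest) (m # ms) = SC_aux c132 rest (rev a @ m # ms)"
  using assms
proof (induction a arbitrary: rest rule: rev_induct)
  case Nil
  then show ?case by simp
next
  case (snoc y a0)
  have s: "sorted_wrt (<) a0" "\<forall>z\<in>set a0. z < y" using snoc.prems by (auto simp: sorted_wrt_append)
  have "\<forall>z\<in>dl (rev a0 @ m # ms). z < y"
    using dl_stack[OF snoc.prems(3), of a0] s snoc.prems(2) by auto
  then have nc: "\<not> c132 (y # rev a0 @ m # ms)"
    using nc_stack[of a0 m ms] s snoc.prems by (auto simp: contains_Cons)
  have "SC_aux c132 ((a0 @ [y]) @ rest) (m # ms) = SC_aux c132 (y # rest) (rev a0 @ m # ms)"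
    using snoc s by simp
  also have "\<dots> = SC_aux c132 rest (y # rev a0 @ m # ms)"
    by (rule push_step) (use nc in auto)
  finally show ?case by simp
qed

lemma min_arrive:
  assumes "\<forall>z\<in>set st. m < z" "distinct st"
  shows "\<exists>P S. SC_aux c132 (m # ys) st = P @ SC_aux c132 ys (m # S) \<and> sorted_wrt (<) (m # S) \<and> set S \<subseteq> set st"
  using assms
proof (induction st)
  case Nil
  then show ?case by (intro exI[of _ "[]"]) auto
next
  case (Cons y st)
  show ?case
  proof (cases "c132 (m # y # st)")
    case True
    from Cons obtain P S where "SC_aux c132 (m # ys) st = P @ SC_aux c132 ys (m # S)"
      "sorted_wrt (<) (m # S)" "set S \<subseteq> set st" by auto
    then show ?thesis using True by (intro exI[of _ "y # P"] exI[of _ S]) auto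
  next
    case False
    then have "\<forall>z\<in>dl (y # st). \<not> m < z" by (simp add: contains_Cons)
    then have "dl (y # st) = {}" using dl_subset[of "y # st"] Cons.prems by auto
    then have "sorted_wrt (<) (y # st)" using dl_empty_sorted Cons.prems by blast
    then show ?thesis using False Cons.prems by (intro exI[of _ "[]"] exI[of _ "y # st"]) auto
  qed
qed

lemma pop_good:
  assumes "sorted_wrt (<) a'" "sorted_wrt (<) ms" "ms = [] \<Longrightarrow> a' = []" "\<forall>z\<in>set a'. hd ms < z"
    "\<forall>z\<in>set a' \<union> set ms. m < z"
  shows "SC_aux c132 (m # ys) (rev a' @ ms) = rev a' @ SC_aux c132 ys (m # ms)"
  using assms
proof (induction a' rule: rev_induct)
  case Nil
  show ?case
  proof (cases ms)
    case Nil then show ?thesis by simp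
  next
    case (Cons q t)
    have "sorted_wrt (<) (m # ms)" using Nil by auto
    then have "\<not> c132 (m # ms)" by (rule not_contains_sorted)
    then show ?thesis using Cons by (simp del: SC_aux.simps add: push_step)
  qed
next
  case (snoc x a0)
  have ne: "ms \<noteq> []" using snoc.prems(3) by auto
  have s: "sorted_wrt (<) a0" "\<forall>z\<in>set a0. z < x" using snoc.prems by (auto simp: sorted_wrt_append)
  obtain q t where qt: "rev a0 @ ms = q # t" using ne by (cases "rev a0 @ ms") auto
  have "q < x"
  proof (cases a0 rule: rev_cases)
    case Nil then show ?thesis using qt snoc.prems(4) by (cases ms) auto
  next
    case (snoc a1 w) then show ?thesis using qt s by auto
  qed
  moreover have "m < q" using qt snoc.prems(5) by (metis Un_iff list.set_intros(1) set_append set_rev)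
  ultimately have "c132 (m # x # q # t)" by (simp add: contains_Cons)
  then have "SC_aux c132 (m # ys) (rev (a0 @ [x]) @ ms) = x # SC_aux c132 (m # ys) (rev a0 @ ms)"
    using qt by simp
  also have "\<dots> = x # rev a0 @ SC_aux c132 ys (m # ms)"
    using snoc.IH s snoc.prems ne by (simp add: sorted_wrt_append)
  finally show ?case by simp
qed


fun wfB :: "nat \<Rightarrow> (nat \<times> nat list) list \<Rightarrow> bool" where
  "wfB b [] = True"
| "wfB b ((m, a) # B) = (m < b \<and> (\<forall>x\<in>set a. m < x) \<and> wfB m B)"

lemma good_run:
  assumes "wfB b B" "\<forall>z\<in>set a' \<union> set ms. b \<le> z" "sorted_wrt (<) ms" "sorted_wrt (<) a'"
    "ms = [] \<Longrightarrow> a' = []" "\<forall>z\<in>set a'. hd ms < z" "\<forall>(m, a)\<in>set B. sorted_wrt (<) a"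
  shows "SC_aux c132 (concat (map (\<lambda>(m, a). m # a) B)) (rev a' @ ms)
         = rev a' @ concat (map (\<lambda>(m, a). rev a) B) @ rev (map fst B) @ ms"
  using assms
proof (induction B arbitrary: b a' ms)
  case Nil
  then show ?case by simp
next
  case (Cons ma B)
  obtain m a where ma: "ma = (m, a)" by fastforce
  have h: "m < b" "\<forall>x\<in>set a. m < x" "wfB m B" "sorted_wrt (<) a" "\<forall>(m, a)\<in>set B. sorted_wrt (<) a"
    using Cons.prems ma by auto
  have mz: "\<forall>z\<in>set a' \<union> set ms. m < z" using h(1) Cons.prems(2) by (meson less_le_trans)
  have sm: "sorted_wrt (<) (m # ms)" using mz Cons.prems(3) by auto
  have "SC_aux c132 (concat (map (\<lambda>(m, a). m # a) (ma # B))) (rev a' @ ms)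
      = SC_aux c132 (m # a @ concat (map (\<lambda>(m, a). m # a) B)) (rev a' @ ms)" using ma by simp
  also have "\<dots> = rev a' @ SC_aux c132 (a @ concat (map (\<lambda>(m, a). m # a) B)) (m # ms)"
    by (rule pop_good) (use Cons.prems mz in auto)
  also have "\<dots> = rev a' @ SC_aux c132 (concat (map (\<lambda>(m, a). m # a) B)) (rev a @ m # ms)"
    using push_block[OF h(4) h(2) sm] by simp
  also have "\<dots> = rev a' @ rev a @ concat (map (\<lambda>(m, a). rev a) B) @ rev (map fst B) @ m # ms"
    using Cons.IH[OF h(3), of a "m # ms"] h sm mz by fastforce
  finally show ?case using ma by simp
qed

lemma nc_push: "\<not> c132 st \<Longrightarrow> \<forall>z\<in>dl st. z < y \<Longrightarrow> \<not> c132 (y # st)"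
  by (auto simp: contains_Cons)

lemma caseA:
  assumes "sorted_wrt (<) (p @ [x])" "\<forall>z\<in>set (p @ [x]). m < z" "sorted_wrt (<) (m # S2)"
    "m < y" "y < x" "y \<notin> set p"
  shows "\<exists>P S x'. SC_aux c132 (y # ys) (x # rev p @ m # S2) = P @ SC_aux c132 ys S \<and> y < x' \<and> subseq [y, x', m] S"
  using assms
proof (induction p arbitrary: x rule: rev_induct)
  case Nil
  have d0: "dl (m # S2) = {}" by (rule dl_sorted) (use Nil in auto)
  have "dl (x # m # S2) = {m}" using Nil d0 by simp
  moreover have "\<not> c132 (x # m # S2)" using nc_stack[of "[x]" m S2] Nil by auto
  ultimately have "\<not> c132 (y # x # m # S2)" using Nil(4) by (subst contains_Cons) auto
  then show ?case using Nil by (intro exI[of _ "[]"] exI[of _ "y # x # m # S2"] exI[of _ x]) auto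
next
  case (snoc x0 p0)
  have s: "x0 < x" "sorted_wrt (<) (p0 @ [x0])" "\<forall>z\<in>set p0. z < x0" "y \<noteq> x0" "y \<notin> set p0"
    using snoc.prems by (auto simp: sorted_wrt_append)
  show ?case
  proof (cases "y < x0")
    case True
    have "c132 (y # x # x0 # rev p0 @ m # S2)" using True s by (simp add: contains_Cons)
    then have e: "SC_aux c132 (y # ys) (x # rev (p0 @ [x0]) @ m # S2) = x # SC_aux c132 (y # ys) (x0 # rev p0 @ m # S2)"
      by simp
    obtain P S x' where "SC_aux c132 (y # ys) (x0 # rev p0 @ m # S2) = P @ SC_aux c132 ys S" "y < x'" "subseq [y, x', m] S"
      using snoc.IH[of x0] snoc.prems s True by auto
    then show ?thesis using e by (intro exI[of _ "x # P"] exI[of _ S] exI[of _ x']) auto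
  next
    case False
    then have yx0: "x0 < y" using s by auto
    have d1: "dl (rev (p0 @ [x0]) @ m # S2) \<subseteq> set (p0 @ [x0]) \<union> {m}"
      by (rule dl_stack) (use snoc.prems in auto)
    have d2: "dl (x # x0 # rev p0 @ m # S2) = {x0} \<union> dl (x0 # rev p0 @ m # S2)"
      using s(1) by simp
    have "\<forall>z\<in>dl (x # x0 # rev p0 @ m # S2). z < y"
      using d1 d2 s(3) yx0 snoc.prems(4) by fastforce
    moreover have "\<not> c132 (rev (p0 @ [x0, x]) @ m # S2)"
      by (rule nc_stack) (use snoc.prems in auto)
    ultimately have nc: "\<not> c132 (y # x # x0 # rev p0 @ m # S2)"
      using nc_push[of "x # x0 # rev p0 @ m # S2" y] by simp
    have "SC_aux c132 (y # ys) (x # rev (p0 @ [x0]) @ m # S2) = SC_aux c132 ys (y # x # x0 # rev p0 @ m # S2)"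
      using nc by simp
    moreover have "subseq [y, x, m] (y # x # x0 # rev p0 @ m # S2)"
      by (simp add: subseq_singleton_left)
    ultimately show ?thesis using snoc.prems(5) by (intro exI[of _ "[]"] exI[of _ "y # x # x0 # rev p0 @ m # S2"] exI[of _ x]) auto
  qed
qed




lemma SC_prefix:
  assumes "distinct (xs @ st)"
  shows "\<exists>P S. SC_aux cont (xs @ ys) st = P @ SC_aux cont ys S \<and> set S \<subseteq> set xs \<union> set st \<and> distinct S"
  using assms
proof (induction cont xs st rule: SC_aux.induct)
  case (1 cont st)
  then show ?case by (intro exI[of _ "[]"] exI[of _ st]) auto
next
  case (2 cont x xs)
  then obtain P S where "SC_aux cont (xs @ ys) [x] = P @ SC_aux cont ys S" "set S \<subseteq> set xs \<union> {x}" "distinct S"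
    by auto
  then show ?case by (intro exI[of _ P] exI[of _ S]) auto
next
  case (3 cont x xs y st)
  show ?case
  proof (cases "cont (x # y # st)")
    case False
    then obtain P S where "SC_aux cont (xs @ ys) (x # y # st) = P @ SC_aux cont ys S"
      "set S \<subseteq> set xs \<union> set (x # y # st)" "distinct S"
      using 3 by auto
    then show ?thesis using False by (intro exI[of _ P] exI[of _ S]) auto
  next
    case True
    then obtain P S where "SC_aux cont ((x # xs) @ ys) st = P @ SC_aux cont ys S"
      "set S \<subseteq> set (x # xs) \<union> set st" "distinct S"
      using 3 by auto
    then show ?thesis using True by (intro exI[of _ "y # P"] exI[of _ S]) auto
  qed
qed

definition ltrb :: "nat \<Rightarrow> nat list \<Rightarrow> nat list" where
  "ltrb b xs = map (\<lambda>i. xs ! i) (filter (\<lambda>i. xs ! i < b \<and> (\<forall>j<i. xs ! i < xs ! j)) [0..<length xs])"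

lemma cm: "concat (map (\<lambda>i. if P i then [f i] else []) L) = map f (filter P L)"
  by (induction L) auto

lemma ltr_eq: "\<forall>x\<in>set xs. x < b \<Longrightarrow> ltr_minima xs = ltrb b xs"
  unfolding ltr_minima_def ltrb_def is_ltr_min_def cm
  by (auto intro!: arg_cong[where f="map _"] filter_cong)

lemma ltrb_Nil[simp]: "ltrb b [] = []" by (simp add: ltrb_def)

lemma ltrb_Cons[simp]: "ltrb b (x # xs) = (if x < b then x # ltrb x xs else ltrb b xs)"
proof -
  have u: "[0..<length (x # xs)] = 0 # map Suc [0..<length xs]"
    by (simp only: length_Cons upt_conv_Cons[OF zero_less_Suc] map_Suc_upt)
  have a: "\<And>i. (\<forall>j<Suc i. xs ! i < (x # xs) ! j) \<longleftrightarrow> xs ! i < x \<and> (\<forall>j<i. xs ! i < xs ! j)"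
    by (auto simp: less_Suc_eq_0_disj)
  show ?thesis
    unfolding ltrb_def u
    by (auto simp: filter_map comp_def a intro!: arg_cong[where f="map _"] filter_cong)
qed


lemma ltrb_set: "set (ltrb b xs) \<subseteq> set xs"
  by (induction xs arbitrary: b) (auto split: if_splits)

lemma ltrb_app_ge: "\<forall>x\<in>set xs. b \<le> x \<Longrightarrow> ltrb b (xs @ zs) = ltrb b zs"
  by (induction xs) auto

lemma ltrb_app_lt: "\<exists>x\<in>set xs. x < b \<Longrightarrow> \<exists>x ys. ltrb b (xs @ zs) = x # ys \<and> x \<in> set xs"
  by (induction xs arbitrary: b) (auto, metis)

abbreviation blk :: "nat \<times> nat list \<Rightarrow> nat list" where "blk \<equiv> (\<lambda>(m, a). m # a)"

lemma wfB_of: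
  assumes "distinct (concat (map blk B))" "map fst B = ltrb b (concat (map blk B))"
  shows "wfB b B"
  using assms
proof (induction B arbitrary: b)
  case Nil then show ?case by simp
next
  case (Cons ma B)
  obtain m a where ma: "ma = (m, a)" by fastforce
  let ?T = "concat (map blk B)"
  have d: "distinct (m # a @ ?T)" using Cons.prems ma by simp
  show ?case
  proof (cases "m < b")
    case False
    then have "m # map fst B = ltrb b (a @ ?T)" using Cons.prems ma by simp
    then have "m \<in> set (a @ ?T)" using ltrb_set by (metis list.set_intros(1) subsetD)
    then show ?thesis using d by simp
  next
    case True
    then have e: "map fst B = ltrb m (a @ ?T)" using Cons.prems ma by simp
    have ge: "\<forall>x\<in>set a. m \<le> x"
    proof (rule ccontr)
      assume "\<not> (\<forall>x\<in>set a. m \<le> x)"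
      then obtain x ys where xy: "ltrb m (a @ ?T) = x # ys" "x \<in> set a"
        using ltrb_app_lt[of a m ?T] by force
      then obtain a' B' where B: "B = (x, a') # B'" using e by (cases B) auto
      then have "x \<in> set ?T" by simp
      moreover have "set a \<inter> set ?T = {}" using d by (metis distinct.simps(2) distinct_append)
      ultimately show False using xy(2) by blast
    qed
    then have "map fst B = ltrb m ?T" using e ltrb_app_ge by simp
    moreover have "\<forall>x\<in>set a. m < x" using ge d by force
    ultimately show ?thesis using Cons.IH[of m] Cons.prems ma True by simp
  qed
qed

lemma wfB_mid:
  assumes "wfB b (B1 @ (m, a) # B2)"
  shows "(\<forall>z\<in>set (concat (map blk B1)). m < z) \<and> (\<forall>z\<in>set a. m < z) \<and> m < b"
  using assms
proof (induction B1 arbitrary: b)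
  case Nil then show ?case by simp
next
  case (Cons ma B1)
  obtain m0 a0 where ma: "ma = (m0, a0)" by fastforce
  then have "m0 < b" "\<forall>x\<in>set a0. m0 < x" "wfB m0 (B1 @ (m, a) # B2)" using Cons.prems by auto
  then show ?case using Cons.IH[of m0] ma by fastforce
qed

lemma wfB_sorted: "wfB b B \<Longrightarrow> sorted_wrt (>) (map fst B) \<and> (\<forall>x\<in>set (map fst B). x < b)"
proof (induction B arbitrary: b)
  case Nil then show ?case by simp
next
  case (Cons ma B)
  obtain m0 a0 where ma: "ma = (m0, a0)" by fastforce
  then show ?case using Cons by fastforce
qed




definition has231 :: "nat list \<Rightarrow> bool" where
  "has231 v \<longleftrightarrow> (\<exists>i j k. i < j \<and> j < k \<and> k < length v \<and> v ! k < v ! i \<and> v ! i < v ! j)"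

lemma has231I: "i < j \<Longrightarrow> j < k \<Longrightarrow> k < length v \<Longrightarrow> v ! k < v ! i \<Longrightarrow> v ! i < v ! j \<Longrightarrow> has231 v"
  unfolding has231_def by blast

lemma has231_split:
  assumes "has231 (p @ y # q)"
  shows "has231 (p @ q) \<or> (\<exists>a\<in>set q. a < y) \<or> (\<exists>b\<in>set p. b < y) \<or> (\<exists>i j. i < j \<and> j < length p \<and> p ! i < p ! j)"
proof -
  define v where "v = p @ y # q"
  define w where "w = p @ q"
  define L where "L = length p"
  have lv: "length v = Suc (length w)" unfolding v_def w_def by simp
  obtain i j k where ijk: "i < j" "j < k" "k < length v" "v ! k < v ! i" "v ! i < v ! j"
    using assms unfolding has231_def v_def by blast
  have lo: "v ! n = w ! n" "v ! n = p ! n" if "n < L" for n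
    using that unfolding v_def w_def L_def by (simp_all add: nth_append)
  have hi: "v ! n = w ! (n - 1)" if nL: "L < n" for n
  proof -
    obtain d where d: "n = Suc (L + d)" using less_imp_Suc_add[OF nL] by blast
    show ?thesis unfolding d v_def w_def L_def by (simp add: nth_append)
  qed
  have hiq: "v ! n \<in> set q" if nL: "L < n" and nv: "n < length v" for n
  proof -
    obtain d where d: "n = Suc (L + d)" using less_imp_Suc_add[OF nL] by blast
    have "d < length q" using nv unfolding d v_def L_def by simp
    then show ?thesis unfolding d v_def L_def by (simp add: nth_append)
  qed
  have lop: "v ! n \<in> set p" if "n < L" for n
    using that lo(2)[OF that] unfolding L_def by simp
  have mid: "v ! L = y" unfolding v_def L_def by simp
  show ?thesis
  proof (cases "k \<le> L")
    case True
    then have jL: "j < L" "i < L" using ijk by linarith+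
    have "p ! i < p ! j" using ijk(5) lo(2)[OF jL(1)] lo(2)[OF jL(2)] by simp
    then have "\<exists>i j. i < j \<and> j < length p \<and> p ! i < p ! j" using ijk(1) jL unfolding L_def by blast
    then show ?thesis by (intro disjI2)
  next
    case False
    then have kL: "L < k" by simp
    consider "j < L" | "j = L" | "L < j" by linarith
    then show ?thesis
    proof cases
      case 1
      then have iL: "i < L" using ijk by linarith
      have "has231 w"
        by (rule has231I[of i j "k - 1"]) (use ijk kL 1 iL lv lo(1)[OF 1] lo(1)[OF iL] hi[OF kL] in auto)
      then show ?thesis unfolding w_def by (rule disjI1)
    next
      case 2
      then have iL: "i < L" using ijk by linarith
      have "v ! i < y" using ijk(5) 2 mid by simp
      then have "\<exists>b\<in>set p. b < y" using lop[OF iL] by blast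
      then show ?thesis by (intro disjI2 disjI1)
    next
      case 3
      consider "i < L" | "i = L" | "L < i" by linarith
      then show ?thesis
      proof cases
        case 1
        have "has231 w"
          by (rule has231I[of i "j - 1" "k - 1"]) (use ijk kL 1 3 lv lo(1)[OF 1] hi[OF 3] hi[OF kL] in auto)
        then show ?thesis unfolding w_def by (rule disjI1)
      next
        case 2
        have "v ! k < y" using ijk(4) 2 mid by simp
        then have "\<exists>a\<in>set q. a < y" using hiq[OF kL ijk(3)] by blast
        then show ?thesis by (intro disjI2 disjI1)
      next
        case i3: 3
        have "has231 w"
          by (rule has231I[of "i - 1" "j - 1" "k - 1"]) (use ijk kL i3 3 lv hi[OF i3] hi[OF 3] hi[OF kL] in auto)
        then show ?thesis unfolding w_def by (rule disjI1)
      qed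
    qed
  qed
qed

lemma has231_del:
  assumes "has231 (p @ q)"
  shows "has231 (p @ y # q)"
proof -
  let ?L = "length p"
  obtain i j k where ijk: "i < j" "j < k" "k < length (p @ q)" "(p @ q) ! k < (p @ q) ! i" "(p @ q) ! i < (p @ q) ! j"
    using assms unfolding has231_def by blast
  define f where "f n = (if n < ?L then n else Suc n)" for n
  have fv: "\<And>n. (p @ y # q) ! (f n) = (p @ q) ! n"
    unfolding f_def by (simp add: nth_append)
  have "f i < f j" "f j < f k" "f k < length (p @ y # q)" using ijk unfolding f_def by auto
  then show ?thesis unfolding has231_def using ijk fv by metis
qed

lemma has231_decomp:
  assumes "a < b" "b < c"
  shows "has231 (p1 @ b # p2 @ c # p3 @ a # p4)"
  unfolding has231_def
  apply (rule exI[of _ "length p1"], rule exI[of _ "length p1 + 1 + length p2"],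
         rule exI[of _ "length p1 + 1 + length p2 + 1 + length p3"])
  using assms by (simp add: nth_append)

lemma contains_21_iff: "contains_21 xs \<longleftrightarrow> \<not> sorted xs"
  unfolding contains_21_def sorted_iff_nth_mono_less by (auto simp: not_le)

lemma SC_set: "set (SC_aux c xs st) = set xs \<union> set st"
  using SC_mset[of c xs st] by (metis set_mset_mset set_mset_union)

lemma west_good:
  assumes "sorted st" "\<not> has231 (rev st @ xs)"
  shows "sorted (SC_aux contains_21 xs st)"
  using assms
proof (induction "contains_21" xs st rule: SC_aux.induct)
  case (1 st)
  then show ?case by simp
next
  case (2 x xs)
  then show ?case by simp
next
  case (3 x xs y st)
  show ?case
  proof (cases "contains_21 (x # y # st)")
    case False
    then have "sorted (x # y # st)" by (simp add: contains_21_iff)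
    then show ?thesis using 3 False by simp
  next
    case True
    have sy: "sorted (y # st)" using 3 by simp
    then have yx: "y < x" using True unfolding contains_21_iff by auto
    have nh: "\<not> has231 (rev st @ x # xs)"
      using has231_del[of "rev st" "x # xs" y] 3(4) by auto
    have IH: "sorted (SC_aux contains_21 (x # xs) st)" using 3(2) True sy nh by simp
    have "\<forall>a\<in>set xs. y \<le> a"
    proof
      fix a assume a: "a \<in> set xs"
      then obtain xs1 xs2 where xs: "xs = xs1 @ a # xs2" by (meson split_list)
      show "y \<le> a"
      proof (rule ccontr)
        assume "\<not> y \<le> a"
        then have "has231 (rev st @ y # [] @ x # xs1 @ a # xs2)" using yx by (intro has231_decomp) auto
        then show False using 3(4) xs by simp
      qed
    qed
    then have "\<forall>z\<in>set (SC_aux contains_21 (x # xs) st). y \<le> z"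
      using sy yx by (auto simp: SC_set)
    then show ?thesis using IH True by simp
  qed
qed

lemma west_bad:
  assumes "sorted st" "has231 (rev st @ xs)"
  shows "\<not> sorted (SC_aux contains_21 xs st)"
  using assms
proof (induction "contains_21" xs st rule: SC_aux.induct)
  case (1 st)
  have "sorted_wrt (\<ge>) (rev st)" using 1 by (simp add: sorted_wrt_rev)
  then show ?case using 1 unfolding has231_def
    by (auto dest: sorted_wrt_nth_less[of "(\<ge>)" "rev st"])
next
  case (2 x xs)
  then show ?case by simp
next
  case (3 x xs y st)
  show ?case
  proof (cases "contains_21 (x # y # st)")
    case False
    then have "sorted (x # y # st)" by (simp add: contains_21_iff)
    then show ?thesis using 3 False by simp
  next
    case True
    have sy: "sorted (y # st)" using 3 by simp
    have "has231 (rev st @ y # x # xs)" using 3(4) by simp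
    then consider "has231 (rev st @ x # xs)" | "\<exists>a\<in>set (x # xs). a < y" | "\<exists>b\<in>set (rev st). b < y"
      | "\<exists>i j. i < j \<and> j < length (rev st) \<and> rev st ! i < rev st ! j"
      using has231_split by blast
    then show ?thesis
    proof cases
      case 1
      then have "\<not> sorted (SC_aux contains_21 (x # xs) st)" using 3(2) True sy by simp
      then show ?thesis using True by simp
    next
      case 2
      then obtain a where a: "a \<in> set (SC_aux contains_21 (x # xs) st)" "a < y" by (auto simp: SC_set)
      have "SC_aux contains_21 (x # xs) (y # st) = y # SC_aux contains_21 (x # xs) st" using True by simp
      then show ?thesis using a by (metis not_le sorted_simps(2))
    next
      case 3
      then show ?thesis using sy by auto
    next
      case 4
      have "sorted_wrt (\<ge>) (rev st)" using sy by (simp add: sorted_wrt_rev)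
      then show ?thesis using 4 by (auto dest: sorted_wrt_nth_less[of "(\<ge>)" "rev st"])
    qed
  qed
qed




lemma first_desc: "\<not> sorted_wrt (<) (a :: nat list) \<Longrightarrow> \<exists>p x y q. a = p @ x # y # q \<and> sorted_wrt (<) (p @ [x]) \<and> \<not> x < y"
proof (induction a)
  case Nil then show ?case by simp
next
  case (Cons z a)
  show ?case
  proof (cases "sorted_wrt (<) a")
    case True
    then obtain w r where a: "a = w # r" using Cons.prems by (cases a) auto
    have "\<not> z < w"
    proof
      assume "z < w"
      moreover have "\<forall>e\<in>set r. w < e" using True a by simp
      ultimately have "\<forall>e\<in>set r. z < e" using less_trans by blast
      then have "sorted_wrt (<) (z # a)" using True a \<open>z < w\<close> by simp
      then show False using Cons.prems by simp
    qed
    then show ?thesis using a by (intro exI[of _ "[]"] exI[of _ z] exI[of _ w] exI[of _ r]) auto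
  next
    case False
    then obtain p x y q where pq: "a = p @ x # y # q" "sorted_wrt (<) (p @ [x])" "\<not> x < y"
      using Cons.IH by blast
    show ?thesis
    proof (cases "sorted_wrt (<) (z # p @ [x])")
      case True
      then show ?thesis using pq by (intro exI[of _ "z # p"] exI[of _ x] exI[of _ y] exI[of _ q]) auto
    next
      case False
      obtain w r where wr: "p @ [x] = w # r" by (cases "p @ [x]") auto
      have "\<not> z < w"
      proof
        assume "z < w"
        moreover have "\<forall>e\<in>set r. w < e" "sorted_wrt (<) r" using pq(2) wr by (metis sorted_wrt.simps(2))+
        ultimately have "\<forall>e\<in>set r. z < e" using less_trans by blast
        then have "sorted_wrt (<) (z # w # r)" using \<open>z < w\<close> \<open>\<forall>e\<in>set r. w < e\<close> \<open>sorted_wrt (<) r\<close> by simp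
        then show False using False wr by simp
      qed
      moreover have "z # a = [] @ z # w # (r @ y # q)" using pq wr by simp
      ultimately show ?thesis by (intro exI[of _ "[]"] exI[of _ z] exI[of _ w] exI[of _ "r @ y # q"]) auto
    qed
  qed
qed

lemma not_sorted_D:
  fixes B :: "(nat \<times> nat list) list"
  assumes "\<not> sorted_wrt (>) (concat (map (\<lambda>(m, a). rev a) B))"
  shows "(\<exists>B1 m a B2. B = B1 @ (m, a) # B2 \<and> \<not> sorted_wrt (<) a) \<or>
         (\<exists>B1 m a B2 m' a' B3 u v. B = B1 @ (m, a) # B2 @ (m', a') # B3 \<and> u \<in> set a \<and> v \<in> set a' \<and> u \<le> v)"
  using assms
proof (induction B)
  case Nil then show ?case by simp
next
  case (Cons ma B)
  obtain m a where ma: "ma = (m, a)" by fastforce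
  define R where "R = concat (map (\<lambda>(m, a). rev a) B)"
  have h: "\<not> (sorted_wrt (>) (rev a) \<and> sorted_wrt (>) R \<and> (\<forall>x\<in>set (rev a). \<forall>y\<in>set R. x > y))"
    using Cons.prems ma unfolding R_def by (simp add: sorted_wrt_append)
  have e: "sorted_wrt (>) (rev a) = sorted_wrt (<) a" by (simp add: sorted_wrt_rev)
  show ?case
  proof (cases "sorted_wrt (<) a")
    case False
    have "ma # B = [] @ (m, a) # B" using ma by simp
    then show ?thesis using False by blast
  next
    case sa: True
    show ?thesis
    proof (cases "sorted_wrt (>) R")
      case False
      from Cons.IH[OF False[unfolded R_def]] show ?thesis
      proof
        assume "\<exists>B1 m a B2. B = B1 @ (m, a) # B2 \<and> \<not> sorted_wrt (<) a"
        then obtain B1 m' a' B2 where b: "B = B1 @ (m', a') # B2" "\<not> sorted_wrt (<) a'" by blast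
        then have "ma # B = (ma # B1) @ (m', a') # B2" by simp
        then show ?thesis using b(2) by blast
      next
        assume "\<exists>B1 m a B2 m' a' B3 u v. B = B1 @ (m, a) # B2 @ (m', a') # B3 \<and> u \<in> set a \<and> v \<in> set a' \<and> u \<le> v"
        then obtain B1 m1 a1 B2 m' a' B3 u v where b: "B = B1 @ (m1, a1) # B2 @ (m', a') # B3" "u \<in> set a1" "v \<in> set a'" "u \<le> v"
          by blast
        then have "ma # B = (ma # B1) @ (m1, a1) # B2 @ (m', a') # B3" by simp
        then show ?thesis using b(2-4) by blast
      qed
    next
      case True
      then have "\<not> (\<forall>x\<in>set (rev a). \<forall>y\<in>set R. x > y)" using h sa e by blast
      then have "\<exists>u\<in>set a. \<exists>v\<in>set R. u \<le> v" by (auto simp: not_less)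
      then obtain u v where uv: "u \<in> set a" "v \<in> set R" "u \<le> v" by blast
      from uv(2) obtain x where x: "x \<in> set B" "v \<in> set ((\<lambda>(m, a). rev a) x)" unfolding R_def by auto
      obtain m' a' where x': "x = (m', a')" by fastforce
      have va: "v \<in> set a'" using x(2) x' by simp
      obtain B2 B3 where "B = B2 @ (m', a') # B3" using x(1) x' by (metis split_list)
      then have "ma # B = [] @ (m, a) # B2 @ (m', a') # B3" using ma by simp
      then show ?thesis using uv(1,3) va by blast
    qed
  qed
qed

lemma noh231:
  assumes "sorted_wrt (>) D" "sorted_wrt (<) I"
  shows "\<not> has231 (D @ I)"
proof
  assume "has231 (D @ I)"
  then obtain i j k where ijk: "i < j" "j < k" "k < length (D @ I)" "(D @ I) ! k < (D @ I) ! i" "(D @ I) ! i < (D @ I) ! j"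
    unfolding has231_def by blast
  show False
  proof (cases "j < length D")
    case True
    then have "D ! j < D ! i" using sorted_wrt_nth_less[OF assms(1) ijk(1)] by simp
    moreover have "(D @ I) ! i = D ! i" "(D @ I) ! j = D ! j" using True ijk(1) by (auto simp: nth_append)
    ultimately show False using ijk(5) by simp
  next
    case False
    then have "I ! (j - length D) < I ! (k - length D)"
      using sorted_wrt_nth_less[OF assms(2), of "j - length D" "k - length D"] ijk by auto
    moreover have "(D @ I) ! j = I ! (j - length D)" "(D @ I) ! k = I ! (k - length D)"
      using False ijk by (auto simp: nth_append)
    ultimately show False using ijk(4,5) by simp
  qed
qed

lemma conc_sorted: "sorted_wrt P (concat xss) \<Longrightarrow> xs \<in> set xss \<Longrightarrow> sorted_wrt P xs"
  by (induction xss) (auto simp: sorted_wrt_append)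


lemma subseq3_has231:
  assumes "subseq [b, c, a] R" "a < b" "b < c"
  shows "has231 (P @ R)"
proof -
  obtain us1 v1 vs1 where 1: "R = us1 @ v1 # vs1" "b = v1" "subseq [c, a] vs1"
    using list_emb_ConsD[OF assms(1)] by blast
  obtain us2 v2 vs2 where 2: "vs1 = us2 @ v2 # vs2" "c = v2" "subseq [a] vs2"
    using list_emb_ConsD[OF 1(3)] by blast
  obtain us3 v3 vs3 where 3: "vs2 = us3 @ v3 # vs3" "a = v3"
    using list_emb_ConsD[OF 2(3)] by blast
  have "P @ R = (P @ us1) @ b # us2 @ c # us3 @ a # vs3" using 1 2 3 by simp
  then show ?thesis using has231_decomp[OF assms(2,3)] by metis
qed

lemma bad_A:
  assumes "distinct (concat (map blk B))" "wfB b B" "B = B1 @ (m, a) # B2" "\<not> sorted_wrt (<) a"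
  shows "has231 (SC c132 (concat (map blk B)))"
proof -
  obtain p x y q where pq: "a = p @ x # y # q" "sorted_wrt (<) (p @ [x])" "\<not> x < y"
    using first_desc[OF assms(4)] by blast
  let ?T1 = "concat (map blk B1)" and ?T2 = "concat (map blk B2)"
  have tau: "concat (map blk B) = ?T1 @ m # ((p @ [x]) @ y # (q @ ?T2))" using assms(3) pq by simp
  have d: "distinct (?T1 @ m # ((p @ [x]) @ y # (q @ ?T2)))" using assms(1) tau by metis
  have yx: "y < x" "y \<notin> set p" using d pq(3) by auto
  have w: "\<forall>z\<in>set ?T1. m < z" "\<forall>z\<in>set a. m < z" using wfB_mid assms(2,3) by blast+
  obtain P1 S1 where 1: "SC_aux c132 (?T1 @ m # ((p @ [x]) @ y # (q @ ?T2))) [] = P1 @ SC_aux c132 (m # ((p @ [x]) @ y # (q @ ?T2))) S1"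
    "set S1 \<subseteq> set ?T1" "distinct S1"
    using SC_prefix[of ?T1 "[]" c132 "m # ((p @ [x]) @ y # (q @ ?T2))"] d by auto
  obtain P2 S2 where 2: "SC_aux c132 (m # ((p @ [x]) @ y # (q @ ?T2))) S1 = P2 @ SC_aux c132 ((p @ [x]) @ y # (q @ ?T2)) (m # S2)"
    "sorted_wrt (<) (m # S2)"
    using min_arrive[of S1 m "(p @ [x]) @ y # (q @ ?T2)"] 1 w(1) by blast
  have 3: "SC_aux c132 ((p @ [x]) @ y # (q @ ?T2)) (m # S2) = SC_aux c132 (y # (q @ ?T2)) (x # rev p @ m # S2)"
    using push_block[OF pq(2) _ 2(2), of "y # (q @ ?T2)"] w(2) pq(1) by simp
  obtain P3 S x' where 4: "SC_aux c132 (y # (q @ ?T2)) (x # rev p @ m # S2) = P3 @ SC_aux c132 (q @ ?T2) S"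
    "y < x'" "subseq [y, x', m] S"
  proof -
    have mz: "\<forall>z\<in>set (p @ [x]). m < z" "m < y" using w(2) pq(1) by auto
    show ?thesis using that caseA[OF pq(2) mz(1) 2(2) mz(2) yx(1) yx(2), of "q @ ?T2"] by blast
  qed
  have "subseq [y, x', m] (SC_aux c132 (q @ ?T2) S)" using 4(3) SC_subseq by (rule subseq_order.trans)
  then have "has231 ((P1 @ P2 @ P3) @ SC_aux c132 (q @ ?T2) S)"
    by (rule subseq3_has231) (use 4(2) w(2) pq(1) in auto)
  then show ?thesis unfolding SC_def tau 1(1) 2(1) 3 4(1) by simp
qed

lemma bad_B:
  assumes "distinct (concat (map blk B))" "wfB b B" "\<forall>(m, a)\<in>set B. sorted_wrt (<) a"
    "B = B1 @ (m, a) # B2 @ (m', a') # B3" "u \<in> set a" "v \<in> set a'" "u \<le> v"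
  shows "has231 (SC c132 (concat (map blk B)))"
proof -
  have sc: "SC c132 (concat (map blk B)) = concat (map (\<lambda>(m, a). rev a) B) @ rev (map fst B)"
    unfolding SC_def using good_run[OF assms(2), of "[]" "[]"] assms(3) by simp
  have "u \<noteq> v" using assms(1,4,5,6) by auto
  then have uv: "u < v" using assms(7) by simp
  have mu: "m < u" using wfB_mid[of b B1 m a "B2 @ (m', a') # B3"] assms(2,4,5) by auto
  obtain r1 r2 where r: "rev a = r1 @ u # r2" using assms(5) by (metis set_rev split_list)
  obtain s1 s2 where s: "rev a' = s1 @ v # s2" using assms(6) by (metis set_rev split_list)
  let ?R = "\<lambda>B. concat (map (\<lambda>(m, a). rev a) B)"
  have "concat (map (\<lambda>(m, a). rev a) B) @ rev (map fst B)
     = (?R B1 @ r1) @ u # (r2 @ ?R B2 @ s1) @ v # (s2 @ ?R B3 @ rev (map fst B3) @ m' # rev (map fst B2)) @ m # rev (map fst B1)"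
    using assms(4) r s by simp
  then show ?thesis unfolding sc using has231_decomp[OF mu uv] by metis
qed




theorem mainTheorem10:
  fixes n :: nat and \<tau> :: "nat list" and B :: "(nat \<times> nat list) list"
  assumes "n \<ge> 1"
    and "\<tau> \<in> permutations_of_set {1..n}"
    and "map fst B = ltr_minima \<tau>"
    and "concat (map (\<lambda>(m, a). m # a) B) = \<tau>"
  shows "\<tau> \<in> Sort_SC n contains_1_32 \<longleftrightarrow>
         sorted_wrt (>) (concat (map (\<lambda>(m, a). rev a) B))"
proof -
  have st: "set \<tau> = {1..n}" "distinct \<tau>" using assms(2) by (auto simp: permutations_of_set_def)
  have lt: "\<forall>x\<in>set \<tau>. x < Suc n" using st by auto
  have wf: "wfB (Suc n) B"
    by (rule wfB_of) (use assms(3,4) st(2) ltr_eq[OF lt] in auto)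
  have msu: "mset [1..<n+1] = mset \<tau>"
  proof -
    have "set [1..<n+1] = set \<tau>" using st by auto
    then show ?thesis using st(2) by (metis distinct_upt mset_set_set)
  qed
  have west_eq: "west_s \<sigma> = [1..<n+1]" if "mset \<sigma> = mset \<tau>" "sorted (west_s \<sigma>)" for \<sigma>
  proof -
    have "mset (west_s \<sigma>) = mset [1..<n+1]" using that(1) msu unfolding west_s_def SC_def by (simp add: SC_mset)
    then have "sort [1..<n+1] = west_s \<sigma>" using that(2) by (rule properties_for_sort)
    then show ?thesis by (metis sorted_sort_id sorted_upt)
  qed
  have msc: "mset (SC c132 \<tau>) = mset \<tau>" unfolding SC_def by (simp add: SC_mset)
  show ?thesis
  proof
    assume "\<tau> \<in> Sort_SC n contains_1_32"
    then have "west_s (SC c132 \<tau>) = [1..<n+1]" unfolding Sort_SC_def by simp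
    then have "sorted (west_s (SC c132 \<tau>))" by (metis sorted_upt)
    then have "sorted (SC_aux contains_21 (SC c132 \<tau>) [])" unfolding west_s_def SC_def .
    then have nh: "\<not> has231 (SC c132 \<tau>)" using west_bad[of "[]" "SC c132 \<tau>"] by auto
    show "sorted_wrt (>) (concat (map (\<lambda>(m, a). rev a) B))"
    proof (rule ccontr)
      assume ns: "\<not> sorted_wrt (>) (concat (map (\<lambda>(m, a). rev a) B))"
      show False
      proof (cases "\<forall>(m, a)\<in>set B. sorted_wrt (<) a")
        case False
        then obtain m a where "(m, a) \<in> set B" "\<not> sorted_wrt (<) a" by auto
        then obtain B1 B2 where b: "B = B1 @ (m, a) # B2" "\<not> sorted_wrt (<) a" by (metis split_list)
        have d: "distinct (concat (map blk B))" using st(2) assms(4) by simp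
        have "has231 (SC c132 (concat (map blk B)))" using bad_A[OF d wf b] .
        then show False using nh assms(4) by simp
      next
        case True
        from not_sorted_D[OF ns] show False
        proof
          assume "\<exists>B1 m a B2. B = B1 @ (m, a) # B2 \<and> \<not> sorted_wrt (<) a"
          then show False using True by auto
        next
          assume "\<exists>B1 m a B2 m' a' B3 u v. B = B1 @ (m, a) # B2 @ (m', a') # B3 \<and> u \<in> set a \<and> v \<in> set a' \<and> u \<le> v"
          then obtain B1 m a B2 m' a' B3 u v where b: "B = B1 @ (m, a) # B2 @ (m', a') # B3" "u \<in> set a" "v \<in> set a'" "u \<le> v"
            by blast
          have d: "distinct (concat (map blk B))" using st(2) assms(4) by simp
          have "has231 (SC c132 (concat (map blk B)))" using bad_B[OF d wf True b] .
          then show False using nh assms(4) by simp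
        qed
      qed
    qed
  next
    assume sD: "sorted_wrt (>) (concat (map (\<lambda>(m, a). rev a) B))"
    have allS: "\<forall>(m, a)\<in>set B. sorted_wrt (<) a"
    proof
      fix ma assume "ma \<in> set B"
      obtain m a where ma: "ma = (m, a)" by fastforce
      have "rev a \<in> set (map (\<lambda>(m, a). rev a) B)" using \<open>ma \<in> set B\<close> ma by force
      then have "sorted_wrt (>) (rev a)" using conc_sorted[OF sD] by blast
      then show "case ma of (m, a) \<Rightarrow> sorted_wrt (<) a" using ma by (simp add: sorted_wrt_rev)
    qed
    have sc: "SC c132 \<tau> = concat (map (\<lambda>(m, a). rev a) B) @ rev (map fst B)"
      unfolding SC_def using good_run[OF wf, of "[]" "[]"] allS assms(4) by simp
    have "sorted_wrt (<) (rev (map fst B))" using wfB_sorted[OF wf] by (simp add: sorted_wrt_rev)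
    then have "\<not> has231 (SC c132 \<tau>)" unfolding sc using noh231 sD by blast
    then have "sorted (SC_aux contains_21 (SC c132 \<tau>) [])" using west_good[of "[]"] by simp
    then have "west_s (SC c132 \<tau>) = [1..<n+1]" using west_eq[OF msc] unfolding west_s_def SC_def by simp
    then show "\<tau> \<in> Sort_SC n contains_1_32" unfolding Sort_SC_def using assms(2) by simp
  qed
qed


end
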